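(* Let $p\in(0,1/2)$, $\gamma\in(0,1)$, $L\ge1$ an integer, and let $\mathcal{C}\subseteq\mathbb{F}_2^n$ be a linear code of dimension $k\le(1-\gamma)n$ such that for all $1\le\ell\le L$, $$Q_{\mathcal{C}}^{(\ge\ell)}\le\left(2^{-n(1-H(p))}\cdot2^k\right)^\ell\cdot2^{\gamma\ell^2n}.$$ Then for $b$ chosen uniformly from $\mathbb{F}_2^n$, with probability at least $1-4L^3\cdot2^{-\gamma n}$ over $b$, for all $1\le\ell\le L$, $$Q_{\mathcal{C}+\{0,b\}}^{(\ge\ell)}\le\left(2^{-n(1-H(p))}\cdot2^{k+1}\right)^\ell\cdot2^{\gamma\ell^2n}.$$
   Context: $\Delta$ is Hamming distance, $L_{\mathcal{C}}(x)=|\{c\in\mathcal{C}:\Delta(x,c)\le pn\}|$, $H(p)=-p\log_2p-(1-p)\log_2(1-p)$. $P_{\mathcal{C}}^{(\ell)}=2^{-n}|\{x\in\mathbb{F}_2^n:L_{\mathcal{C}}(x)=\ell\}|$ and $Q_{\mathcal{C}}^{(\ge\ell)}=\sum_{i\ge\ell}i\cdot P_{\mathcal{C}}^{(i)}$. $\mathcal{C}+\{0,b\}=\mathcal{C}\cup(\mathcal{C}+b)$. *)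

theory Defs
  imports "HOL-Analysis.Analysis"
begin

text \<open>Vectors of F_2^n are boolean lists of length n; addition is coordinatewise XOR.\<close>

definition cube :: "nat \<Rightarrow> bool list set" where
  "cube n = {x. length x = n}"

definition vadd :: "bool list \<Rightarrow> bool list \<Rightarrow> bool list" where
  "vadd x y = map2 (\<lambda>a b. a \<noteq> b) x y"

definition hamming :: "bool list \<Rightarrow> bool list \<Rightarrow> nat" where
  "hamming x y = card {i. i < length x \<and> x ! i \<noteq> y ! i}"

definition linear_code :: "nat \<Rightarrow> bool list set \<Rightarrow> bool" where
  "linear_code n C \<longleftrightarrow> C \<subseteq> cube n \<and> replicate n False \<in> C
      \<and> (\<forall>x\<in>C. \<forall>y\<in>C. vadd x y \<in> C)"

definition code_dim :: "bool list set \<Rightarrow> nat \<Rightarrow> bool" where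
  "code_dim C k \<longleftrightarrow> card C = 2 ^ k"

definition list_size :: "nat \<Rightarrow> real \<Rightarrow> bool list set \<Rightarrow> bool list \<Rightarrow> nat" where
  "list_size n p C x = card {c\<in>C. real (hamming x c) \<le> p * real n}"

definition P_frac :: "nat \<Rightarrow> real \<Rightarrow> bool list set \<Rightarrow> nat \<Rightarrow> real" where
  "P_frac n p C l = card {x\<in>cube n. list_size n p C x = l} / 2 ^ n"

definition Q_ge :: "nat \<Rightarrow> real \<Rightarrow> bool list set \<Rightarrow> nat \<Rightarrow> real" where
  "Q_ge n p C l = (\<Sum>i\<in>{l..card C}. real i * P_frac n p C i)"

definition shift_union :: "bool list set \<Rightarrow> bool list \<Rightarrow> bool list set" where
  "shift_union C b = C \<union> (\<lambda>c. vadd c b) ` C"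

definition H2 :: "real \<Rightarrow> real" where
  "H2 p = - p * log 2 p - (1 - p) * log 2 (1 - p)"

end

theory Submission imports Defs begin

lemma cube_eq: "cube n = {xs. set xs \<subseteq> (UNIV::bool set) \<and> length xs = n}"
  by (auto simp: cube_def)
lemma cube_finite: "finite (cube n)"
  unfolding cube_eq by (rule finite_lists_length_eq) simp
lemma cube_card: "card (cube n) = 2^n"
  unfolding cube_eq using card_lists_length_eq[of "UNIV::bool set" n] by simp

lemma vadd_len: "length (vadd x y) = min (length x) (length y)" by (simp add: vadd_def)
lemma vadd_nth: "i < length x \<Longrightarrow> i < length y \<Longrightarrow> vadd x y ! i = (x!i \<noteq> y!i)"
  by (simp add: vadd_def)
lemma vadd_inv: "length x = length b \<Longrightarrow> vadd (vadd x b) b = x"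
  by (rule nth_equalityI) (auto simp: vadd_len vadd_nth)
lemma vadd_comm: "vadd x y = vadd y x"
  unfolding vadd_def by (rule nth_equalityI) auto
lemma vadd_cube: "x \<in> cube n \<Longrightarrow> b \<in> cube n \<Longrightarrow> vadd x b \<in> cube n"
  by (simp add: cube_def vadd_len)

lemma sum_shift: "b \<in> cube n \<Longrightarrow> (\<Sum>x\<in>cube n. g (vadd x b)) = (\<Sum>x\<in>cube n. g x)"
  apply (rule sum.reindex_bij_witness[where i="\<lambda>x. vadd x b" and j="\<lambda>x. vadd x b"])
  by (auto simp: vadd_inv vadd_cube vadd_len cube_def)

lemma hamming_shift: "length x = n \<Longrightarrow> length b = n \<Longrightarrow> length c = n \<Longrightarrow>
   hamming x (vadd c b) = hamming (vadd x b) c"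
  unfolding hamming_def by (rule arg_cong[where f=card]) (auto simp: vadd_len vadd_nth)

lemma list_size_shift:
  assumes "C \<subseteq> cube n" "finite C" "x \<in> cube n" "b \<in> cube n"
  shows "list_size n p (shift_union C b) x \<le> list_size n p C x + list_size n p C (vadd x b)"
proof -
  let ?P = "\<lambda>c. real (hamming x c) \<le> p * real n"
  let ?f = "\<lambda>c. vadd c b"
  have "{c\<in>shift_union C b. ?P c} = {c\<in>C. ?P c} \<union> ?f ` {c\<in>C. ?P (?f c)}"
    unfolding shift_union_def by auto
  moreover have "{c\<in>C. ?P (?f c)} = {c\<in>C. real (hamming (vadd x b) c) \<le> p * real n}"
    using assms by (auto simp: hamming_shift cube_def subset_iff)
  ultimately have "card {c\<in>shift_union C b. ?P c} \<le> card {c\<in>C. ?P c} + card {c\<in>C. real (hamming (vadd x b) c) \<le> p * real n}"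
    by (metis (no_types, lifting) card_Un_le card_image_le assms(2) finite_subset le_trans mem_Collect_eq subsetI add_left_mono)
  thus ?thesis unfolding list_size_def .
qed

lemma list_size_le: "finite D \<Longrightarrow> list_size n p D x \<le> card D"
  unfolding list_size_def by (rule card_mono) auto

lemma Q_sum:
  assumes "finite D"
  shows "Q_ge n p D l * 2^n = (\<Sum>x\<in>cube n. if l \<le> list_size n p D x then real (list_size n p D x) else 0)"
proof -
  let ?L = "list_size n p D"
  have "(\<Sum>x\<in>cube n. if l \<le> ?L x then real (?L x) else 0)
      = (\<Sum>x\<in>cube n. \<Sum>i\<in>{l..card D}. if ?L x = i then real i else 0)"
    using list_size_le[OF assms] by (intro sum.cong) (auto simp: sum.delta)
  also have "\<dots> = (\<Sum>i\<in>{l..card D}. \<Sum>x\<in>cube n. if ?L x = i then real i else 0)"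
    by (rule sum.swap)
  also have "\<dots> = (\<Sum>i\<in>{l..card D}. real i * card {x\<in>cube n. ?L x = i})"
    by (intro sum.cong refl) (simp add: sum.inter_filter[OF cube_finite, symmetric])
  also have "\<dots> = Q_ge n p D l * 2^n"
    unfolding Q_ge_def P_frac_def by (simp add: sum_distrib_right)
  finally show ?thesis by simp
qed


lemma g_split:
  fixes a c l :: nat
  shows "(if l \<le> a + c then real (a + c) else 0) \<le>
     (if l \<le> a then real a else 0) + (if l \<le> c then real c else 0)
     + ((if 1 \<le> a \<and> a < l \<and> l - a \<le> c then real a else 0)
       + (if 1 \<le> c \<and> c < l \<and> l - c \<le> a then real c else 0))"
  by (auto split: if_splits)

lemma hh_le:
  fixes a c l :: nat
  shows "(if 1 \<le> a \<and> a < l \<and> l - a \<le> c then real a else 0) \<le>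
    (\<Sum>i\<in>{1..<l}. (if i \<le> a then real a else 0) * (if l - i \<le> c then real c else 0))"
proof (cases "1 \<le> a \<and> a < l \<and> l - a \<le> c")
  case True
  have "real a \<le> (if a \<le> a then real a else 0) * (if l - a \<le> c then real c else 0)"
    using True by (simp add: mult_le_cancel_left1) (subgoal_tac "1 \<le> c", simp, linarith)
  also have "\<dots> \<le> (\<Sum>i\<in>{1..<l}. (if i \<le> a then real a else 0) * (if l - i \<le> c then real c else 0))"
    by (rule member_le_sum) (use True in auto)
  finally show ?thesis using True by simp
next
  case False
  then show ?thesis by (simp only: if_not_P[OF False] if_False) (rule sum_nonneg, auto)
qed

lemma exp_ineq:
  fixes i j :: nat and g n :: real
  assumes "i \<ge> 1" "j \<ge> 1" "g \<ge> 0" "n \<ge> 0"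
  shows "g * real i ^ 2 * n + g * real j ^ 2 * n \<le> g * real (i + j) ^ 2 * n + (- 2 * g * n)"
proof -
  have "real i * real j \<ge> 1" using assms by (metis mult_mono' of_nat_0_le_iff of_nat_1 of_nat_le_iff mult_1_right)
  hence "real i ^ 2 + real j ^ 2 \<le> real (i+j) ^ 2 - 2" by (simp add: power2_eq_square algebra_simps)
  hence "g * n * (real i ^ 2 + real j ^ 2) \<le> g * n * (real (i+j) ^ 2 - 2)"
    using assms by (intro mult_left_mono) auto
  thus ?thesis by (simp add: algebra_simps)
qed


theorem lemma4:
  fixes n k L :: nat and p \<gamma> :: real and C :: "bool list set"
  assumes "0 < p" "p < 1/2" "0 < \<gamma>" "\<gamma> < 1" "L \<ge> 1"
    and "linear_code n C" "code_dim C k" "real k \<le> (1 - \<gamma>) * real n"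
    and "\<forall>l\<in>{1..L}. Q_ge n p C l
           \<le> (2 powr (- real n * (1 - H2 p)) * 2 ^ k) ^ l * 2 powr (\<gamma> * real l ^ 2 * real n)"
  shows "card {b\<in>cube n. \<forall>l\<in>{1..L}. Q_ge n p (shift_union C b) l
           \<le> (2 powr (- real n * (1 - H2 p)) * 2 ^ (k + 1)) ^ l * 2 powr (\<gamma> * real l ^ 2 * real n)}
         / 2 ^ n \<ge> 1 - 4 * real L ^ 3 * 2 powr (- \<gamma> * real n)"
proof -
  define \<beta> where "\<beta> = 2 powr (- real n * (1 - H2 p)) * 2 ^ k"
  define M where "M l = \<beta> ^ l * 2 powr (\<gamma> * real l ^ 2 * real n)" for l :: nat
  define A where "A x = list_size n p C x" for x
  define fr where "fr i a = (if i \<le> a then real a else 0)" for i a :: nat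
  define S where "S i = (\<Sum>x\<in>cube n. fr i (A x))" for i
  define hh where "hh l a c = (if 1 \<le> a \<and> a < l \<and> l - a \<le> c then real a else 0)" for l a c :: nat
  define R where "R l b = (\<Sum>x\<in>cube n. hh l (A x) (A (vadd x b)) + hh l (A (vadd x b)) (A x))" for l b
  define Q' where "Q' l b = Q_ge n p (shift_union C b) l" for l b
  define T where "T l = (2 powr (- real n * (1 - H2 p)) * 2 ^ (k + 1)) ^ l * 2 powr (\<gamma> * real l ^ 2 * real n)" for l :: nat
  define P1 where "P1 = (2::real) powr (- \<gamma> * real n)"
  define P2 where "P2 = (2::real) powr (- 2 * \<gamma> * real n)"
  have Csub: "C \<subseteq> cube n" using assms(6) by (simp add: linear_code_def)
  have finC: "finite C" using Csub cube_finite finite_subset by blast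
  have bpos: "\<beta> > 0" unfolding \<beta>_def by simp
  have Mpos: "M l > 0" for l unfolding M_def using bpos by simp
  have TM: "T l = 2 ^ l * M l" for l unfolding T_def M_def \<beta>_def by (simp add: power_mult_distrib)
  have hyp: "l \<in> {1..L} \<Longrightarrow> Q_ge n p C l \<le> M l" for l using assms(9) unfolding M_def \<beta>_def by blast
  have SQ: "S i = Q_ge n p C i * 2 ^ n" for i unfolding S_def fr_def A_def using Q_sum[OF finC] by simp
  have Sle: "i \<in> {1..L} \<Longrightarrow> S i \<le> 2 ^ n * M i" for i using hyp[of i] by (simp add: SQ mult.commute)
  have Snn: "S i \<ge> 0" for i unfolding S_def fr_def by (intro sum_nonneg) auto
  have hhnn: "hh l a c \<ge> 0" for l a c unfolding hh_def by auto
  have Rnn: "R l b \<ge> 0" for l b unfolding R_def using hhnn by (intro sum_nonneg) (simp add: add_nonneg_nonneg)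
  have key: "Q' l b * 2 ^ n \<le> 2 * S l + R l b" if b: "b \<in> cube n" for l b
  proof -
    have fin': "finite (shift_union C b)" unfolding shift_union_def using finC by simp
    have "Q' l b * 2 ^ n = (\<Sum>x\<in>cube n. fr l (list_size n p (shift_union C b) x))"
      unfolding Q'_def fr_def by (rule Q_sum[OF fin'])
    also have "\<dots> \<le> (\<Sum>x\<in>cube n. fr l (A x + A (vadd x b)))"
    proof (rule sum_mono)
      fix x assume x: "x \<in> cube n"
      show "fr l (list_size n p (shift_union C b) x) \<le> fr l (A x + A (vadd x b))"
        using list_size_shift[OF Csub finC x b, of p] unfolding fr_def A_def by auto
    qed
    also have "\<dots> \<le> (\<Sum>x\<in>cube n. fr l (A x) + fr l (A (vadd x b)) + (hh l (A x) (A (vadd x b)) + hh l (A (vadd x b)) (A x)))"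
      by (intro sum_mono) (unfold fr_def hh_def, rule g_split)
    also have "\<dots> = S l + S l + R l b"
      unfolding S_def R_def sum.distrib using sum_shift[OF b, of "\<lambda>y. fr l (A y)"] by simp
    finally show ?thesis by simp
  qed
  have Rsum: "(\<Sum>b\<in>cube n. R l b) = 2 * (\<Sum>x\<in>cube n. \<Sum>y\<in>cube n. hh l (A x) (A y))" for l
  proof -
    have "(\<Sum>b\<in>cube n. R l b) = (\<Sum>x\<in>cube n. \<Sum>b\<in>cube n. hh l (A x) (A (vadd b x)) + hh l (A (vadd b x)) (A x))"
      unfolding R_def by (subst sum.swap) (simp add: vadd_comm)
    also have "\<dots> = (\<Sum>x\<in>cube n. \<Sum>y\<in>cube n. hh l (A x) (A y) + hh l (A y) (A x))"
    proof (rule sum.cong[OF refl])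
      fix x assume "x \<in> cube n"
      then show "(\<Sum>b\<in>cube n. hh l (A x) (A (vadd b x)) + hh l (A (vadd b x)) (A x))
          = (\<Sum>y\<in>cube n. hh l (A x) (A y) + hh l (A y) (A x))"
        using sum_shift[of x n "\<lambda>y. hh l (A x) (A y) + hh l (A y) (A x)"] by simp
    qed
    also have "\<dots> = (\<Sum>x\<in>cube n. \<Sum>y\<in>cube n. hh l (A x) (A y)) + (\<Sum>x\<in>cube n. \<Sum>y\<in>cube n. hh l (A y) (A x))"
      by (simp add: sum.distrib)
    also have "(\<Sum>x\<in>cube n. \<Sum>y\<in>cube n. hh l (A y) (A x)) = (\<Sum>x\<in>cube n. \<Sum>y\<in>cube n. hh l (A x) (A y))"
      by (rule sum.swap)
    finally show ?thesis by simp
  qed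
  have hhsum: "(\<Sum>x\<in>cube n. \<Sum>y\<in>cube n. hh l (A x) (A y)) \<le> (\<Sum>i\<in>{1..<l}. S i * S (l - i))" for l
  proof -
    have "(\<Sum>x\<in>cube n. \<Sum>y\<in>cube n. hh l (A x) (A y)) \<le> (\<Sum>x\<in>cube n. \<Sum>y\<in>cube n. \<Sum>i\<in>{1..<l}. fr i (A x) * fr (l - i) (A y))"
      unfolding hh_def fr_def by (intro sum_mono hh_le)
    also have "\<dots> = (\<Sum>x\<in>cube n. \<Sum>i\<in>{1..<l}. \<Sum>y\<in>cube n. fr i (A x) * fr (l - i) (A y))"
      by (intro sum.cong refl) (rule sum.swap)
    also have "\<dots> = (\<Sum>i\<in>{1..<l}. \<Sum>x\<in>cube n. \<Sum>y\<in>cube n. fr i (A x) * fr (l - i) (A y))"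
      by (rule sum.swap)
    also have "\<dots> = (\<Sum>i\<in>{1..<l}. S i * S (l - i))"
      unfolding S_def by (simp add: sum_product)
    finally show ?thesis .
  qed
  have prodb: "S i * S (l - i) \<le> (2 ^ n * 2 ^ n) * (M l * P2)" if "l \<le> L" "i \<in> {1..<l}" for l i
  proof -
    have i1: "i \<in> {1..L}" and j1: "l - i \<in> {1..L}" using that by auto
    have li: "l = i + (l - i)" using that by auto
    have "S i * S (l - i) \<le> (2 ^ n * M i) * (2 ^ n * M (l - i))"
      using Sle[OF i1] Sle[OF j1] Snn Mpos[of i] by (intro mult_mono) (auto intro: less_imp_le)
    also have "\<dots> = (2 ^ n * 2 ^ n) * (M i * M (l - i))" by (simp add: algebra_simps)
    finally have s1: "S i * S (l - i) \<le> (2 ^ n * 2 ^ n) * (M i * M (l - i))" .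
    have bl: "\<beta> ^ l = \<beta> ^ i * \<beta> ^ (l - i)" by (subst li) (simp add: power_add)
    have e: "M i * M (l - i) = \<beta> ^ l * 2 powr (\<gamma> * real i ^ 2 * real n + \<gamma> * real (l - i) ^ 2 * real n)"
      unfolding M_def bl powr_add by (simp add: algebra_simps)
    have "\<gamma> * real i ^ 2 * real n + \<gamma> * real (l - i) ^ 2 * real n \<le> \<gamma> * real (i + (l - i)) ^ 2 * real n + (- 2 * \<gamma> * real n)"
      by (rule exp_ineq) (use that assms(3) in auto)
    hence "\<gamma> * real i ^ 2 * real n + \<gamma> * real (l - i) ^ 2 * real n \<le> \<gamma> * real l ^ 2 * real n + (- 2 * \<gamma> * real n)"
      using li by simp
    hence "M i * M (l - i) \<le> \<beta> ^ l * 2 powr (\<gamma> * real l ^ 2 * real n + (- 2 * \<gamma> * real n))"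
      unfolding e using bpos by (intro mult_left_mono) auto
    also have "\<dots> = M l * P2" unfolding M_def P2_def by (simp only: powr_add mult.assoc)
    finally have "M i * M (l - i) \<le> M l * P2" .
    with s1 show ?thesis by (meson order_trans mult_left_mono zero_le_mult_iff zero_le_power zero_le_numeral)
  qed
  have badc: "real (card {b\<in>cube n. \<not> Q' l b \<le> T l}) \<le> real L * 2 ^ n * P1" if l: "l \<in> {2..L}" for l
  proof -
    let ?B = "{b\<in>cube n. \<not> Q' l b \<le> T l}"
    have p4: "(2::real) ^ l \<ge> 2 ^ 2" using l by (intro power_increasing) auto
    have c: "R l b \<ge> 2 * 2 ^ n * M l" if "b \<in> ?B" for b
    proof -
      from that have b: "b \<in> cube n" and q: "Q' l b > 2 ^ l * M l" by (auto simp: TM)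
      define W where "W = M l * 2 ^ n"
      have f1: "Q' l b * 2 ^ n \<ge> 2 ^ l * M l * 2 ^ n" using q by simp
      have f2: "2 ^ l * M l * 2 ^ n \<ge> 4 * W" unfolding W_def using p4 Mpos[of l] by simp
      have f3: "2 * S l \<le> 2 * W" unfolding W_def using Sle[of l] l by (simp add: mult.commute)
      have f4: "2 * 2 ^ n * M l = 2 * W" unfolding W_def by simp
      show ?thesis unfolding f4 using f1 f2 f3 key[OF b, of l] by linarith
    qed
    have "real (card ?B) * (2 * 2 ^ n * M l) \<le> (\<Sum>b\<in>?B. R l b)"
      using sum_bounded_below[of ?B "2 * 2 ^ n * M l" "R l", OF c] by simp
    also have "\<dots> \<le> (\<Sum>b\<in>cube n. R l b)"
      by (rule sum_mono2[OF cube_finite]) (auto simp: Rnn)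
    also have "\<dots> \<le> 2 * (\<Sum>i\<in>{1..<l}. S i * S (l - i))" unfolding Rsum using hhsum[of l] by simp
    also have "(\<Sum>i\<in>{1..<l}. S i * S (l - i)) \<le> real (card {1..<l}) * ((2 ^ n * 2 ^ n) * (M l * P2))"
      by (rule sum_bounded_above) (use prodb l in auto)
    finally have "real (card ?B) * (2 * 2 ^ n * M l) \<le> 2 * (real (l - 1) * ((2 ^ n * 2 ^ n) * (M l * P2)))"
      by simp
    hence "real (card ?B) * (2 * 2 ^ n * M l) \<le> (real (l - 1) * 2 ^ n * P2) * (2 * 2 ^ n * M l)"
      by (simp add: algebra_simps)
    hence h1: "real (card ?B) \<le> real (l - 1) * 2 ^ n * P2"
      using Mpos[of l] by (simp add: mult_le_cancel_right)
    have "P2 \<le> P1" unfolding P1_def P2_def using assms(3) by (intro powr_mono) auto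
    moreover have "real (l - 1) \<le> real L" using l by auto
    moreover have "P2 \<ge> 0" unfolding P2_def by simp
    ultimately have "real (l - 1) * 2 ^ n * P2 \<le> real L * 2 ^ n * P1"
      by (intro mult_mono) auto
    with h1 show ?thesis by linarith
  qed
  define G where "G = {b\<in>cube n. \<forall>l\<in>{1..L}. Q' l b \<le> T l}"
  define U where "U = (\<Union>l\<in>{2..L}. {b\<in>cube n. \<not> Q' l b \<le> T l})"
  have hh1: "hh 1 a c = 0" for a c unfolding hh_def by auto
  have R1: "R 1 b = 0" for b unfolding R_def hh1 by simp
  have cov: "cube n \<subseteq> G \<union> U"
  proof
    fix b assume b: "b \<in> cube n"
    show "b \<in> G \<union> U"
    proof (cases "b \<in> U")
      case False
      have "Q' l b \<le> T l" if l: "l \<in> {1..L}" for l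
      proof (cases "l = 1")
        case True
        have a1: "Q' 1 b * 2 ^ n \<le> 2 * S 1" using key[OF b, of 1] R1 by simp
        have a2: "S 1 \<le> 2 ^ n * M 1" using Sle[of 1] assms(5) by simp
        have a3: "(2 * M 1) * 2 ^ n = 2 * (2 ^ n * M 1)" by simp
        have "Q' 1 b * 2 ^ n \<le> (2 * M 1) * 2 ^ n" unfolding a3 using a1 a2 by linarith
        hence "Q' 1 b \<le> 2 * M 1" by (simp add: mult_le_cancel_right)
        hence "Q' 1 b \<le> T 1" by (simp add: TM)
        with True show ?thesis by simp
      next
        case False
        with l have "l \<in> {2..L}" by auto
        with \<open>b \<notin> U\<close> b show ?thesis unfolding U_def by auto
      qed
      with b show ?thesis unfolding G_def by auto
    qed simp
  qed
  have GUsub: "G \<union> U \<subseteq> cube n" unfolding G_def U_def by blast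
  have cardU: "card U \<le> (\<Sum>l\<in>{2..L}. card {b\<in>cube n. \<not> Q' l b \<le> T l})"
    unfolding U_def by (rule card_UN_le) simp
  have "real (2 ^ n) = real (card (cube n))" by (simp add: cube_card)
  also have "\<dots> \<le> real (card (G \<union> U))"
    by (intro of_nat_mono card_mono cov) (rule finite_subset[OF GUsub cube_finite])
  also have "\<dots> \<le> real (card G) + real (card U)"
    using card_Un_le[of G U] by linarith
  also have "real (card U) \<le> (\<Sum>l\<in>{2..L}. real (card {b\<in>cube n. \<not> Q' l b \<le> T l}))"
    using of_nat_mono[OF cardU, where 'a=real] by (simp only: of_nat_sum)
  also have "\<dots> \<le> real (card {2..L}) * (real L * 2 ^ n * P1)"
    by (rule sum_bounded_above) (use badc in auto)
  finally have f: "2 ^ n \<le> real (card G) + real (card {2..L}) * (real L * 2 ^ n * P1)" by simp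
  have L1: "1 \<le> real L" using assms(5) by simp
  have "card {2..L} \<le> L" by simp
  hence c1: "real (card {2..L}) \<le> real L" by (simp only: of_nat_le_iff)
  have "real L * 1 \<le> real L * (4 * real L)" using L1 by (intro mult_left_mono) auto
  hence cL: "real (card {2..L}) \<le> 4 * real L ^ 2" using c1 by (simp add: power2_eq_square)
  have P1nn: "P1 \<ge> 0" unfolding P1_def by simp
  have "real (card {2..L}) * (real L * 2 ^ n * P1) \<le> 4 * real L ^ 2 * (real L * 2 ^ n * P1)"
    using cL P1nn by (intro mult_right_mono) auto
  moreover have "4 * real L ^ 2 * (real L * 2 ^ n * P1) = 2 ^ n * (4 * real L ^ 3 * P1)"
    by (simp only: power3_eq_cube power2_eq_square) (simp only: mult_ac)
  ultimately have g: "2 ^ n \<le> real (card G) + 2 ^ n * (4 * real L ^ 3 * P1)" using f by linarith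
  have "(1 - 4 * real L ^ 3 * P1) * 2 ^ n = 2 ^ n - 2 ^ n * (4 * real L ^ 3 * P1)"
    by (simp add: algebra_simps)
  hence "(1 - 4 * real L ^ 3 * P1) * 2 ^ n \<le> real (card G)" using g by linarith
  hence "1 - 4 * real L ^ 3 * P1 \<le> real (card G) / 2 ^ n"
    by (subst pos_le_divide_eq) simp_all
  thus ?thesis unfolding G_def Q'_def T_def P1_def .
qed

end
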